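(* In a two-intervention factorial stepped-wedge trial (as defined in the context), assuming the matrix $\sum_i\mathbf X_i'\Sigma^{-1}\mathbf X_i-\mathbf S\bar{\mathbf X}$ is invertible, the $2\times 2(T-1)$ matrix $$\mathbf H=\Big[\sum_{i}\mathbf X_i'\Sigma^{-1}\mathbf X_i-\mathbf S\bar{\mathbf X}\Big]^{-1}\Big[\sum_{i}\mathbf X_i'\Sigma^{-1}\mathbf Z_i-\mathbf S\bar{\mathbf Z}\Big]$$ (for which $\mathrm E(\hat\theta)=\mathbf H\delta$ whenever $\mathrm E(\bar{\mathbf y}_i)=\beta+\mathbf Z_i\delta$) has the block form $$\mathbf H=\begin{pmatrix}\mathbf h_1'&\mathbf h_2'\\ \mathbf h_2'&\mathbf h_1'\end{pmatrix}$$ for some row vectors $\mathbf h_1',\mathbf h_2'$ of length $T-1$. Hence $\mathrm E(\hat\theta_1)=\mathbf h_1'\delta_1+\mathbf h_2'\delta_2$ and $\mathrm E(\hat\theta_2)=\mathbf h_2'\delta_1+\mathbf h_1'\delta_2$.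
   Context: A two-intervention ($m=2$) stepped-wedge trial with $T$ periods, $I$ clusters, common cluster-period size $n$. $x_{kij}\in\{0,1\}$ indicates intervention $k$ in cluster $i$ at period $j$, with $x_{ki1}=0$ and $x_{kij}$ nondecreasing in $j$; each cluster starts under control and may add one intervention and later the other. The design is factorial in the sense that the clusters are partitioned into pairs $(i,i')$ whose allocations are mirror images: $x_{1ij}=x_{2i'j}$ and $x_{2ij}=x_{1i'j}$ for all $j$. Exposure time $e_{kij}=\sum_{j'\le j}x_{kij'}$. $\mathbf X_i$ is $T\times2$ with $(j,k)$ entry $x_{kij}$; $\mathbf Z_{k,i}$ is $T\times(T-1)$ with $(j,e)$ entry $1$ iff $e_{kij}=e$; $\mathbf Z_i=(\mathbf Z_{1,i},\mathbf Z_{2,i})$; $\bar{\mathbf Z}=\frac1I\sum_i\mathbf Z_i$, $\bar{\mathbf X}=\frac1I\sum_i\mathbf X_i$, $\mathbf S=\sum_i\mathbf X_i'\Sigma^{-1}$, $\Sigma=\sigma_\alpha^2\mathbf 1\mathbf 1'+(\sigma_\epsilon^2/n)\mathbf I_T$ the covariance of the cluster-period mean vector $\bar{\mathbf y}_i$. $\delta=(\delta_1',\delta_2')'$, $\delta_k\in\mathbb R^{T-1}$ exposure-time-specific effects. $\hat\theta=(\hat\theta_1,\hat\theta_2)'$ is the GLS estimator (known $\Sigma$) of $\theta$ in the working constant-effect model $\bar{\mathbf y}_i=\beta+\mathbf X_i\theta+\mathbf 1\alpha_i+\bar\epsilon_i$ with unrestricted $\beta\in\mathbb R^T$. *)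

theory Defs
  imports "Jordan_Normal_Form.Matrix"
begin

(* Indexing is 0-based: periods j \<in> {0..<T}, clusters i \<in> {0..<I},
   interventions k \<in> {0,1} (paper's k = 1,2). x k i j is x_{(k+1)(i+1)(j+1)}. *)

definition minv :: "real mat \<Rightarrow> real mat" where
  "minv A = (SOME B. inverts_mat A B \<and> inverts_mat B A)"

definition msum :: "nat \<Rightarrow> nat \<Rightarrow> (nat \<Rightarrow> real mat) \<Rightarrow> nat \<Rightarrow> real mat" where
  "msum nr nc f I = mat nr nc (\<lambda>rc. \<Sum>i<I. f i $$ rc)"

definition expo :: "(nat \<Rightarrow> nat \<Rightarrow> nat \<Rightarrow> real) \<Rightarrow> nat \<Rightarrow> nat \<Rightarrow> nat \<Rightarrow> real" where
  "expo x k i j = (\<Sum>j'\<le>j. x k i j')"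

definition Xmat :: "(nat \<Rightarrow> nat \<Rightarrow> nat \<Rightarrow> real) \<Rightarrow> nat \<Rightarrow> nat \<Rightarrow> real mat" where
  "Xmat x T i = mat T 2 (\<lambda>(j,k). x k i j)"

definition Zkmat :: "(nat \<Rightarrow> nat \<Rightarrow> nat \<Rightarrow> real) \<Rightarrow> nat \<Rightarrow> nat \<Rightarrow> nat \<Rightarrow> real mat" where
  "Zkmat x T k i = mat T (T - 1) (\<lambda>(j,c). if expo x k i j = real (c + 1) then 1 else 0)"

definition Zmat :: "(nat \<Rightarrow> nat \<Rightarrow> nat \<Rightarrow> real) \<Rightarrow> nat \<Rightarrow> nat \<Rightarrow> real mat" where
  "Zmat x T i = mat T (2 * (T - 1)) (\<lambda>(j,c).
     if c < T - 1 then Zkmat x T 0 i $$ (j, c) else Zkmat x T 1 i $$ (j, c - (T - 1)))"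

(* covariance of the cluster-period mean vector *)
definition Sigma :: "nat \<Rightarrow> nat \<Rightarrow> real \<Rightarrow> real \<Rightarrow> real mat" where
  "Sigma T n sa2 se2 = mat T T (\<lambda>(j,j'). sa2 + (if j = j' then se2 / real n else 0))"

definition Xbar where
  "Xbar x T I = (1 / real I) \<cdot>\<^sub>m msum T 2 (Xmat x T) I"

definition Zbar where
  "Zbar x T I = (1 / real I) \<cdot>\<^sub>m msum T (2 * (T - 1)) (Zmat x T) I"

definition Smat where
  "Smat x T I n sa2 se2 =
     msum 2 T (\<lambda>i. transpose_mat (Xmat x T i) * minv (Sigma T n sa2 se2)) I"

definition Mmat where
  "Mmat x T I n sa2 se2 =
     msum 2 2 (\<lambda>i. transpose_mat (Xmat x T i) * minv (Sigma T n sa2 se2) * Xmat x T i) I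
     - Smat x T I n sa2 se2 * Xbar x T I"

definition Rmat where
  "Rmat x T I n sa2 se2 =
     msum 2 (2 * (T - 1)) (\<lambda>i. transpose_mat (Xmat x T i) * minv (Sigma T n sa2 se2) * Zmat x T i) I
     - Smat x T I n sa2 se2 * Zbar x T I"

definition Hmat where
  "Hmat x T I n sa2 se2 = minv (Mmat x T I n sa2 se2) * Rmat x T I n sa2 se2"

end

theory Submission imports Defs begin

lemma sigma_inv:
  assumes npos: "n > 0" and sa2: "sa2 \<ge> 0" and se2: "se2 > 0"
  shows "minv (Sigma T n sa2 se2) \<in> carrier_mat T T"
proof -
  define c where "c = se2 / real n"
  have c: "c > 0" using npos se2 by (simp add: c_def)
  define d where "d = sa2 / (c * (c + real T * sa2))"
  have cd: "c * d + real T * sa2 * d = sa2 / c"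
  proof -
    have p: "c + real T * sa2 > 0" using c sa2 by (simp add: add_pos_nonneg)
    have dd: "d = (sa2 / c) / (c + real T * sa2)" unfolding d_def by (simp add: divide_divide_eq_left)
    have e: "(c + real T * sa2) * d = sa2 / c" unfolding dd using p by simp
    show ?thesis using e by (simp add: distrib_right)
  qed
  define A where "A = Sigma T n sa2 se2"
  define B :: "real mat" where "B = mat T T (\<lambda>(j,j'). (if j = j' then 1/c else 0) - d)"
  have A: "A \<in> carrier_mat T T" and B: "B \<in> carrier_mat T T"
    by (auto simp: A_def Sigma_def B_def)
  have key: "(\<Sum>k<T. (sa2 + (if j = k then c else 0)) * ((if k = j' then 1/c else 0) - d))
      = (if j = j' then 1 else 0)" if "j < T" "j' < T" for j j'
  proof -
    have pt: "(sa2 + (if j = k then c else 0)) * ((if k = j' then 1/c else 0) - d)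
      = ((if k = j' then sa2/c else 0) - sa2*d) + (if k = j then c*((if j = j' then 1/c else 0) - d) else 0)" for k
      by (auto simp: algebra_simps)
    have "(\<Sum>k<T. (sa2 + (if j = k then c else 0)) * ((if k = j' then 1/c else 0) - d))
      = (\<Sum>k<T. ((if k = j' then sa2/c else 0) - sa2*d)) + (\<Sum>k<T. (if k = j then c*((if j = j' then 1/c else 0) - d) else 0))"
      unfolding pt by (rule sum.distrib)
    also have "\<dots> = (sa2/c - real T * (sa2*d)) + c*((if j = j' then 1/c else 0) - d)"
      using that by (simp add: sum_subtractf sum.delta')
    also have "\<dots> = (if j = j' then 1 else 0)" using c cd by (auto simp: algebra_simps)
    finally show ?thesis .
  qed
  have Sg: "A = mat T T (\<lambda>(j,j'). sa2 + (if j = j' then c else 0))"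
    unfolding A_def Sigma_def c_def by (rule refl)
  have AB: "A * B = 1\<^sub>m T"
    by (rule eq_matI) (auto simp: Sg B_def scalar_prod_def atLeast0LessThan key)
  have key2: "(\<Sum>k<T. ((if j = k then 1/c else 0) - d) * (sa2 + (if k = j' then c else 0)))
      = (if j = j' then 1 else 0)" if "j < T" "j' < T" for j j'
    using key[OF that(2) that(1)] by (simp add: mult.commute eq_commute cong: if_cong)
  have BA: "B * A = 1\<^sub>m T"
    by (rule eq_matI) (auto simp: Sg B_def scalar_prod_def atLeast0LessThan key2)
  have "\<exists>B. inverts_mat A B \<and> inverts_mat B A"
  proof (rule exI[of _ B])
    have "dim_row A = T" "dim_row B = T" using A B by auto
    then show "inverts_mat A B \<and> inverts_mat B A" unfolding inverts_mat_def using AB BA by simp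
  qed
  then have "inverts_mat A (minv A) \<and> inverts_mat (minv A) A"
    unfolding minv_def by (rule someI_ex)
  then have e1: "A * minv A = 1\<^sub>m T" and e2: "minv A * A = 1\<^sub>m (dim_row (minv A))"
    using A unfolding inverts_mat_def by (auto dest: carrier_matD)
  have d1: "dim_col (minv A) = T" using arg_cong[OF e1, of dim_col] by simp
  have d2: "dim_row (minv A) = T" using arg_cong[OF e2, of dim_col] carrier_matD(2)[OF A] by simp
  show ?thesis using d1 d2 unfolding A_def by (intro carrier_matI) auto
qed


definition P2 :: "real mat" where "P2 = mat 2 2 (\<lambda>(r,c). if r = c then 0 else 1)"
definition sw :: "nat \<Rightarrow> nat \<Rightarrow> nat" where "sw m c = (if c < m then c + m else c - m)"
definition QZ :: "nat \<Rightarrow> real mat" where "QZ m = mat (2*m) (2*m) (\<lambda>(r,c). if r = sw m c then 1 else 0)"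

lemma P2_carrier[simp]: "P2 \<in> carrier_mat 2 2" by (simp add: P2_def)
lemma QZ_carrier[simp]: "QZ m \<in> carrier_mat (2*m) (2*m)" by (simp add: QZ_def)
lemma sw_lt: "c < 2*m \<Longrightarrow> sw m c < 2*m" unfolding sw_def by arith

lemma sum2: fixes f :: "nat \<Rightarrow> real" shows "(\<Sum>k=0..<2. f k) = f 0 + (f 1 :: real)"
  by (simp add: numeral_2_eq_2)

lemma mult_P: assumes "A \<in> carrier_mat nr 2"
  shows "A * P2 = mat nr 2 (\<lambda>(i,k). A $$ (i, 1 - k))"
  using assms by (intro eq_matI) (auto simp: P2_def scalar_prod_def sum2 less_2_cases_iff)

lemma P_mult: assumes "A \<in> carrier_mat 2 nc"
  shows "P2 * A = mat 2 nc (\<lambda>(r,c). A $$ (1 - r, c))"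
  using assms by (intro eq_matI) (auto simp: P2_def scalar_prod_def sum2 less_2_cases_iff)

lemma mult_Q: assumes "A \<in> carrier_mat nr (2*m)"
  shows "A * QZ m = mat nr (2*m) (\<lambda>(i,c). A $$ (i, sw m c))"
proof (intro eq_matI)
  fix i c assume "i < dim_row (mat nr (2*m) (\<lambda>(i,c). A $$ (i, sw m c)))"
      "c < dim_col (mat nr (2*m) (\<lambda>(i,c). A $$ (i, sw m c)))"
  then have ic: "i < nr" "c < 2*m" by auto
  have "(A * QZ m) $$ (i,c) = (\<Sum>k<2*m. A $$ (i,k) * (if k = sw m c then 1 else 0))"
    using assms ic by (simp add: QZ_def scalar_prod_def lessThan_atLeast0)
  also have "\<dots> = A $$ (i, sw m c)"
    using sw_lt[OF ic(2)] by (simp add: if_distrib sum.delta cong: if_cong)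
  finally show "(A * QZ m) $$ (i,c) = mat nr (2*m) (\<lambda>(i,c). A $$ (i, sw m c)) $$ (i,c)"
    using ic by simp
qed (use assms in \<open>auto simp: QZ_def\<close>)

lemma P2P2: "P2 * P2 = 1\<^sub>m 2"
  by (intro eq_matI) (auto simp: P2_def scalar_prod_def sum2 less_2_cases_iff)

lemma sw_sw: "c < 2*m \<Longrightarrow> sw m (sw m c) = c" unfolding sw_def by arith

lemma QQ: "QZ m * QZ m = 1\<^sub>m (2*m)"
  unfolding mult_Q[OF QZ_carrier] by (intro eq_matI) (auto simp: QZ_def sw_sw sw_lt)

lemma P2T: "transpose_mat P2 = P2"
  by (intro eq_matI) (auto simp: P2_def)

lemma msum_carrier[simp]: "msum nr nc f I \<in> carrier_mat nr nc" by (simp add: msum_def)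

lemma msum_reindex: assumes "\<forall>i<I. p i < I \<and> p (p i) = i"
  shows "msum nr nc (\<lambda>i. f (p i)) I = msum nr nc f I"
proof -
  have b: "bij_betw p {..<I} {..<I}"
    by (rule bij_betw_byWitness[where f'=p]) (use assms in auto)
  show ?thesis unfolding msum_def
    by (intro eq_matI) (auto simp: sum.reindex_bij_betw[OF b, of "\<lambda>i. f i $$ _"])
qed

lemma msum_mult_right: assumes "\<forall>i<I. f i \<in> carrier_mat nr k" "B \<in> carrier_mat k nc"
  shows "msum nr nc (\<lambda>i. f i * B) I = msum nr k f I * B"
proof (intro eq_matI)
  fix r c assume "r < dim_row (msum nr k f I * B)" "c < dim_col (msum nr k f I * B)"
  then have rc: "r < nr" "c < nc" using assms by (auto simp: msum_def)
  have "(\<Sum>i<I. (f i * B) $$ (r,c)) = (\<Sum>i<I. \<Sum>l<k. f i $$ (r,l) * B $$ (l,c))"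
    using assms rc by (intro sum.cong) (auto simp: scalar_prod_def lessThan_atLeast0)
  also have "\<dots> = (\<Sum>l<k. (\<Sum>i<I. f i $$ (r,l)) * B $$ (l,c))"
    by (subst sum.swap) (simp add: sum_distrib_right)
  finally show "msum nr nc (\<lambda>i. f i * B) I $$ (r,c) = (msum nr k f I * B) $$ (r,c)"
    using assms rc by (simp add: msum_def scalar_prod_def lessThan_atLeast0)
qed (use assms in \<open>auto simp: msum_def\<close>)

lemma msum_mult_left: assumes "\<forall>i<I. f i \<in> carrier_mat k nc" "B \<in> carrier_mat nr k"
  shows "msum nr nc (\<lambda>i. B * f i) I = B * msum k nc f I"
proof (intro eq_matI)
  fix r c assume "r < dim_row (B * msum k nc f I)" "c < dim_col (B * msum k nc f I)"
  then have rc: "r < nr" "c < nc" using assms by (auto simp: msum_def)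
  have "(\<Sum>i<I. (B * f i) $$ (r,c)) = (\<Sum>i<I. \<Sum>l<k. B $$ (r,l) * f i $$ (l,c))"
    using assms rc by (intro sum.cong) (auto simp: scalar_prod_def lessThan_atLeast0)
  also have "\<dots> = (\<Sum>l<k. B $$ (r,l) * (\<Sum>i<I. f i $$ (l,c)))"
    by (subst sum.swap) (simp add: sum_distrib_left)
  finally show "msum nr nc (\<lambda>i. B * f i) I $$ (r,c) = (B * msum k nc f I) $$ (r,c)"
    using assms rc by (simp add: msum_def scalar_prod_def lessThan_atLeast0)
qed (use assms in \<open>auto simp: msum_def\<close>)

lemma assoc5:
  assumes "A \<in> carrier_mat a b" "B \<in> carrier_mat b d" "C \<in> carrier_mat d e"
    "D \<in> carrier_mat e f" "E \<in> carrier_mat f g"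
  shows "A * B * C * (D * E) = A * (B * C * D) * E"
proof -
  have 1: "A * B * C * (D * E) = A * B * C * D * E"
    using assms by (intro assoc_mult_mat[symmetric]) auto
  have 2: "A * B * C = A * (B * C)" using assms by (intro assoc_mult_mat) auto
  have 3: "A * (B * C) * D = A * (B * C * D)" using assms by (intro assoc_mult_mat) auto
  show ?thesis using 1 2 3 by simp
qed



lemma assoc4:
  assumes "A \<in> carrier_mat a b" "B \<in> carrier_mat b d" "C \<in> carrier_mat d e" "D \<in> carrier_mat e f"
  shows "A * B * (C * D) = A * (B * C) * D"
proof -
  have 1: "A * B * (C * D) = A * B * C * D"
    using assms by (intro assoc_mult_mat[symmetric]) auto
  have 2: "A * B * C = A * (B * C)" using assms by (intro assoc_mult_mat) auto
  show ?thesis using 1 2 by simp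
qed

lemma P2P2': "A \<in> carrier_mat 2 k \<Longrightarrow> P2 * (P2 * A) = A"
  by (metis P2P2 P2_carrier assoc_mult_mat left_mult_one_mat)

lemma minv_props: assumes "invertible_mat A" "A \<in> carrier_mat k k"
  shows "minv A \<in> carrier_mat k k" "A * minv A = 1\<^sub>m k" "minv A * A = 1\<^sub>m k"
proof -
  have "\<exists>B. inverts_mat A B \<and> inverts_mat B A" using assms by (auto simp: invertible_mat_def)
  then have "inverts_mat A (minv A) \<and> inverts_mat (minv A) A"
    unfolding minv_def by (rule someI_ex)
  then have e: "A * minv A = 1\<^sub>m k" "minv A * A = 1\<^sub>m (dim_row (minv A))"
    using assms by (auto simp: inverts_mat_def)
  then show c: "minv A \<in> carrier_mat k k" using assms
    by (metis carrier_matD carrier_matI index_mult_mat(2) index_mult_mat(3) index_one_mat(2) index_one_mat(3))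
  show "A * minv A = 1\<^sub>m k" by (rule e)
  show "minv A * A = 1\<^sub>m k" using e c by auto
qed

lemma conjinv:
  assumes A: "A \<in> carrier_mat 2 2" and B: "B \<in> carrier_mat 2 2"
    and BA: "B * A = 1\<^sub>m 2" and AB: "A * B = 1\<^sub>m 2" and Ae: "P2 * A * P2 = A"
  shows "P2 * B * P2 = B"
proof -
  note ss = assoc_mult_mat[of _ 2 2 _ 2 _ 2] mult_carrier_mat[of _ 2 2] A B P2_carrier P2P2'[of _ 2]
  have BAX: "B * (A * X) = X" if "X \<in> carrier_mat 2 2" for X
    using that A B BA by (simp add: assoc_mult_mat[of _ 2 2 _ 2 _ 2, symmetric])
  have NB: "P2 * B * P2 \<in> carrier_mat 2 2" by (rule mult_carrier_mat[OF mult_carrier_mat[OF P2_carrier B] P2_carrier])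
  have "P2 * B * P2 = (P2 * B * P2) * (A * B)" unfolding AB using right_mult_one_mat[OF NB] by simp
  also have "\<dots> = (P2 * B * P2 * A) * B" by (simp add: ss)
  also have "P2 * B * P2 * A = P2 * B * P2 * (P2 * A * P2)" using Ae by simp
  also have "\<dots> = 1\<^sub>m 2" by (simp add: ss BAX P2P2)
  finally show ?thesis using B by simp
qed

theorem proposition2:
  fixes x :: "nat \<Rightarrow> nat \<Rightarrow> nat \<Rightarrow> real"
    and T I n :: nat and sa2 se2 :: real
  assumes T2: "T \<ge> 2" and npos: "n > 0" and sa2: "sa2 \<ge> 0" and se2: "se2 > 0"
    and binary: "\<And>k i j. k < 2 \<Longrightarrow> i < I \<Longrightarrow> j < T \<Longrightarrow> x k i j \<in> {0, 1}"
    and start: "\<And>k i. k < 2 \<Longrightarrow> i < I \<Longrightarrow> x k i 0 = 0"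
    and mono: "\<And>k i j j'. k < 2 \<Longrightarrow> i < I \<Longrightarrow> j \<le> j' \<Longrightarrow> j' < T \<Longrightarrow> x k i j \<le> x k i j'"
    and pairs: "\<exists>p. (\<forall>i<I. p i < I \<and> p i \<noteq> i \<and> p (p i) = i \<and>
                     (\<forall>j<T. x 0 i j = x 1 (p i) j \<and> x 1 i j = x 0 (p i) j))"
    and inv: "invertible_mat (Mmat x T I n sa2 se2)"
  shows "\<exists>h1 h2. h1 \<in> carrier_vec (T - 1) \<and> h2 \<in> carrier_vec (T - 1) \<and>
           Hmat x T I n sa2 se2 =
             mat 2 (2 * (T - 1)) (\<lambda>(r, c).
               if r = 0 then (if c < T - 1 then h1 $ c else h2 $ (c - (T - 1)))
               else (if c < T - 1 then h2 $ c else h1 $ (c - (T - 1)))) \<and>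
           (\<forall>d1 \<in> carrier_vec (T - 1). \<forall>d2 \<in> carrier_vec (T - 1).
              Hmat x T I n sa2 se2 *\<^sub>v (d1 @\<^sub>v d2) =
                vec 2 (\<lambda>r. if r = 0 then h1 \<bullet> d1 + h2 \<bullet> d2 else h2 \<bullet> d1 + h1 \<bullet> d2))"
proof -
  obtain p where p: "\<forall>i<I. p i < I \<and> p i \<noteq> i \<and> p (p i) = i \<and>
                     (\<forall>j<T. x 0 i j = x 1 (p i) j \<and> x 1 i j = x 0 (p i) j)"
    using pairs by blast
  have pp: "\<forall>i<I. p i < I \<and> p (p i) = i" using p by blast
  define m where "m = T - 1"
  define W where "W = minv (Sigma T n sa2 se2)"
  have Wc: "W \<in> carrier_mat T T" unfolding W_def by (rule sigma_inv[OF npos sa2 se2])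
  define X where "X = Xmat x T"
  define Z where "Z = Zmat x T"
  define Q where "Q = QZ m"
  have Qc: "Q \<in> carrier_mat (2*m) (2*m)" by (simp add: Q_def)
  have Xc: "X i \<in> carrier_mat T 2" for i by (simp add: X_def Xmat_def)
  have Zc: "Z i \<in> carrier_mat T (2*m)" for i by (simp add: Z_def Zmat_def m_def)
  have hX: "X (p i) = X i * P2" if "i < I" for i
  proof -
    have pi: "\<forall>j<T. x 0 i j = x 1 (p i) j \<and> x 1 i j = x 0 (p i) j" using p that by blast
    show ?thesis unfolding mult_P[OF Xc]
    proof (intro eq_matI)
      fix j k assume jk: "j < dim_row (mat T 2 (\<lambda>(i', k). X i $$ (i', 1 - k)))"
        "k < dim_col (mat T 2 (\<lambda>(i', k). X i $$ (i', 1 - k)))"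
      then have "j < T" "k < 2" by auto
      then show "X (p i) $$ (j, k) = mat T 2 (\<lambda>(i', k). X i $$ (i', 1 - k)) $$ (j, k)"
        using pi by (auto simp: X_def Xmat_def less_2_cases_iff)
    qed (auto simp: X_def Xmat_def)
  qed
  have ex01: "expo x 0 (p i) j = expo x 1 i j \<and> expo x 1 (p i) j = expo x 0 i j"
    if "i < I" "j < T" for i j
  proof -
    have pi: "\<forall>j<T. x 0 i j = x 1 (p i) j \<and> x 1 i j = x 0 (p i) j" using p that by blast
    show ?thesis unfolding expo_def using pi that by (auto intro!: sum.cong)
  qed
  have hZ: "Z (p i) = Z i * Q" if "i < I" for i
    unfolding Q_def mult_Q[OF Zc]
  proof (intro eq_matI)
    fix j c assume jc: "j < dim_row (mat T (2 * m) (\<lambda>(i', c). Z i $$ (i', sw m c)))"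
      "c < dim_col (mat T (2 * m) (\<lambda>(i', c). Z i $$ (i', sw m c)))"
    then have j: "j < T" and c: "c < 2*m" by auto
    note e = ex01[OF that j]
    show "Z (p i) $$ (j, c) = mat T (2 * m) (\<lambda>(i', c). Z i $$ (i', sw m c)) $$ (j, c)"
      using j c e by (auto simp: Z_def Zmat_def Zkmat_def sw_def m_def)
  qed (auto simp: Z_def Zmat_def m_def)
  have XT: "transpose_mat (X (p i)) = P2 * transpose_mat (X i)" if "i < I" for i
    using hX[OF that] transpose_mult[OF Xc P2_carrier] P2T by simp
  have XTc: "transpose_mat (X i) \<in> carrier_mat 2 T" for i using Xc[of i] by auto
  define fA where "fA i = transpose_mat (X i) * W * X i" for i
  have fAc: "fA i \<in> carrier_mat 2 2" for i using Wc Xc[of i] by (auto simp: fA_def)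
  have fAp: "fA (p i) = P2 * fA i * P2" if "i < I" for i
    unfolding fA_def XT[OF that] unfolding hX[OF that]
    by (rule assoc5[OF P2_carrier XTc Wc Xc P2_carrier])
  define SA where "SA = msum 2 2 fA I"
  have SAc: "SA \<in> carrier_mat 2 2" by (simp add: SA_def)
  have SAe: "SA = P2 * SA * P2"
  proof -
    have "SA = msum 2 2 (\<lambda>i. fA (p i)) I" unfolding SA_def by (rule msum_reindex[OF pp, symmetric])
    also have "\<dots> = msum 2 2 (\<lambda>i. P2 * fA i * P2) I"
      unfolding msum_def using fAp by (intro eq_matI) auto
    also have "\<dots> = msum 2 2 (\<lambda>i. P2 * fA i) I * P2"
      by (rule msum_mult_right) (use fAc in \<open>auto intro: mult_carrier_mat[OF P2_carrier]\<close>)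
    also have "msum 2 2 (\<lambda>i. P2 * fA i) I = P2 * SA"
      unfolding SA_def by (rule msum_mult_left) (use fAc in auto)
    finally show ?thesis .
  qed
  define fS where "fS i = transpose_mat (X i) * W" for i
  have fSc: "fS i \<in> carrier_mat 2 T" for i using Wc Xc[of i] by (auto simp: fS_def)
  have fSp: "fS (p i) = P2 * fS i" if "i < I" for i
    unfolding fS_def XT[OF that] using Wc XTc[of i] by (simp add: assoc_mult_mat[of _ 2 2 _ T _ T])
  define S where "S = msum 2 T fS I"
  have Sc: "S \<in> carrier_mat 2 T" by (simp add: S_def)
  have Se: "S = P2 * S"
  proof -
    have "S = msum 2 T (\<lambda>i. fS (p i)) I" unfolding S_def by (rule msum_reindex[OF pp, symmetric])
    also have "\<dots> = msum 2 T (\<lambda>i. P2 * fS i) I"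
      unfolding msum_def using fSp by (intro eq_matI) auto
    also have "\<dots> = P2 * S"
      unfolding S_def by (rule msum_mult_left) (use fSc in auto)
    finally show ?thesis .
  qed
  define XB where "XB = Xbar x T I"
  have XBc: "XB \<in> carrier_mat T 2" by (simp add: XB_def Xbar_def)
  have XBe: "XB = XB * P2"
  proof -
    have "msum T 2 X I = msum T 2 (\<lambda>i. X (p i)) I" by (rule msum_reindex[OF pp, symmetric])
    also have "\<dots> = msum T 2 (\<lambda>i. X i * P2) I"
      unfolding msum_def using hX by (intro eq_matI) auto
    also have "\<dots> = msum T 2 X I * P2"
      by (rule msum_mult_right) (use Xc in auto)
    finally have e: "msum T 2 X I = msum T 2 X I * P2" .
    show ?thesis unfolding XB_def Xbar_def X_def[symmetric]
      by (subst mult_smult_assoc_mat[OF msum_carrier P2_carrier]) (use e in simp)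
  qed
  define ZB where "ZB = Zbar x T I"
  have ZBc: "ZB \<in> carrier_mat T (2*m)" by (simp add: ZB_def Zbar_def m_def)
  have ZBe: "ZB = ZB * Q"
  proof -
    have "msum T (2*m) Z I = msum T (2*m) (\<lambda>i. Z (p i)) I" by (rule msum_reindex[OF pp, symmetric])
    also have "\<dots> = msum T (2*m) (\<lambda>i. Z i * Q) I"
      unfolding msum_def using hZ by (intro eq_matI) auto
    also have "\<dots> = msum T (2*m) Z I * Q"
      by (rule msum_mult_right) (use Zc Qc in auto)
    finally have e: "msum T (2*m) Z I = msum T (2*m) Z I * Q" .
    show ?thesis unfolding ZB_def Zbar_def Z_def[symmetric] m_def[symmetric]
      by (subst mult_smult_assoc_mat[OF msum_carrier Qc]) (use e in simp)
  qed
  define fR where "fR i = transpose_mat (X i) * W * Z i" for i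
  have fRc: "fR i \<in> carrier_mat 2 (2*m)" for i using Wc Xc[of i] Zc[of i] by (auto simp: fR_def)
  have fRp: "fR (p i) = P2 * fR i * Q" if "i < I" for i
    unfolding fR_def XT[OF that] unfolding hZ[OF that]
    by (rule assoc5[OF P2_carrier XTc Wc Zc Qc])
  define RA where "RA = msum 2 (2*m) fR I"
  have RAc: "RA \<in> carrier_mat 2 (2*m)" by (simp add: RA_def)
  have RAe: "RA = P2 * RA * Q"
  proof -
    have "RA = msum 2 (2*m) (\<lambda>i. fR (p i)) I" unfolding RA_def by (rule msum_reindex[OF pp, symmetric])
    also have "\<dots> = msum 2 (2*m) (\<lambda>i. P2 * fR i * Q) I"
      unfolding msum_def using fRp by (intro eq_matI) auto
    also have "\<dots> = msum 2 (2*m) (\<lambda>i. P2 * fR i) I * Q"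
      by (rule msum_mult_right) (use fRc Qc in \<open>auto intro: mult_carrier_mat[OF P2_carrier]\<close>)
    also have "msum 2 (2*m) (\<lambda>i. P2 * fR i) I = P2 * RA"
      unfolding RA_def by (rule msum_mult_left) (use fRc in auto)
    finally show ?thesis .
  qed
  define M where "M = Mmat x T I n sa2 se2"
  have Mdef: "M = SA - S * XB"
    unfolding M_def Mmat_def SA_def S_def XB_def Smat_def fA_def fS_def X_def W_def ..
  define R where "R = Rmat x T I n sa2 se2"
  have Rdef: "R = RA - S * ZB"
    unfolding R_def Rmat_def RA_def S_def ZB_def Smat_def fR_def fS_def X_def Z_def W_def m_def ..
  have SXc: "S * XB \<in> carrier_mat 2 2" by (rule mult_carrier_mat[OF Sc XBc])
  have SZc: "S * ZB \<in> carrier_mat 2 (2*m)" by (rule mult_carrier_mat[OF Sc ZBc])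
  have Mc: "M \<in> carrier_mat 2 2" unfolding Mdef by (rule minus_carrier_mat[OF SXc])
  have Rc: "R \<in> carrier_mat 2 (2*m)" unfolding Rdef by (rule minus_carrier_mat[OF SZc])
  have SXe: "S * XB = P2 * (S * XB) * P2"
  proof -
    have "S * XB = P2 * S * (XB * P2)" by (subst Se[symmetric], subst XBe[symmetric]) (rule refl)
    also have "\<dots> = P2 * (S * XB) * P2" by (rule assoc4[OF P2_carrier Sc XBc P2_carrier])
    finally show ?thesis .
  qed
  have SZe: "S * ZB = P2 * (S * ZB) * Q"
  proof -
    have "S * ZB = P2 * S * (ZB * Q)" by (subst Se[symmetric], subst ZBe[symmetric]) (rule refl)
    also have "\<dots> = P2 * (S * ZB) * Q" by (rule assoc4[OF P2_carrier Sc ZBc Qc])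
    finally show ?thesis .
  qed
  have Me: "M = P2 * M * P2"
  proof -
    have "M = P2 * SA * P2 - P2 * (S * XB) * P2" unfolding Mdef by (subst SAe[symmetric], subst SXe[symmetric]) (rule refl)
    also have "\<dots> = (P2 * SA - P2 * (S * XB)) * P2"
      by (rule minus_mult_distrib_mat[symmetric, OF mult_carrier_mat[OF P2_carrier SAc] mult_carrier_mat[OF P2_carrier SXc] P2_carrier])
    also have "P2 * SA - P2 * (S * XB) = P2 * M"
      unfolding Mdef by (rule mult_minus_distrib_mat[symmetric, OF P2_carrier SAc SXc])
    finally show ?thesis .
  qed
  have Re: "R = P2 * R * Q"
  proof -
    have "R = P2 * RA * Q - P2 * (S * ZB) * Q" unfolding Rdef by (subst RAe[symmetric], subst SZe[symmetric]) (rule refl)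
    also have "\<dots> = (P2 * RA - P2 * (S * ZB)) * Q"
      by (rule minus_mult_distrib_mat[symmetric, OF mult_carrier_mat[OF P2_carrier RAc] mult_carrier_mat[OF P2_carrier SZc] Qc])
    also have "P2 * RA - P2 * (S * ZB) = P2 * R"
      unfolding Rdef by (rule mult_minus_distrib_mat[symmetric, OF P2_carrier RAc SZc])
    finally show ?thesis .
  qed
  define Mi where "Mi = minv M"
  note mp = minv_props[OF inv[folded M_def] Mc, folded Mi_def]
  have Mie: "P2 * Mi * P2 = Mi" by (rule conjinv[OF Mc mp(1) mp(3) mp(2) Me[symmetric]])
  define H where "H = Hmat x T I n sa2 se2"
  have Hd: "H = Mi * R" unfolding H_def Hmat_def Mi_def M_def R_def ..
  have Hc: "H \<in> carrier_mat 2 (2*m)" unfolding Hd by (rule mult_carrier_mat[OF mp(1) Rc])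
  have He: "H = P2 * H * Q"
  proof -
    have "H = (P2 * Mi * P2) * (P2 * R * Q)" unfolding Hd Mie Re[symmetric] ..
    also have "\<dots> = P2 * (Mi * R) * Q"
      using mp(1) Rc Qc
      by (simp add: assoc_mult_mat[of _ 2 2 _ 2 _ 2] assoc_mult_mat[of _ 2 2 _ 2 _ "2*m"]
          assoc_mult_mat[of _ 2 2 _ "2*m" _ "2*m"] assoc_mult_mat[of _ 2 "2*m" _ "2*m" _ "2*m"]
          mult_carrier_mat[of _ 2 2] mult_carrier_mat[of _ 2 "2*m" _ "2*m"] P2P2'[of _ "2*m"])
    finally show ?thesis unfolding Hd .
  qed
  have PHQ: "P2 * H * Q = mat 2 (2*m) (\<lambda>(r,c). H $$ (1 - r, sw m c))"
  proof -
    have e: "P2 * H = mat 2 (2*m) (\<lambda>(r,c). H $$ (1 - r, c))" by (rule P_mult[OF Hc])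
    have Gc: "mat 2 (2*m) (\<lambda>(r,c). H $$ (1 - r, c)) \<in> carrier_mat 2 (2*m)" by simp
    show ?thesis unfolding Q_def e mult_Q[OF Gc] by (intro eq_matI) (auto simp: sw_lt)
  qed
  have Hsym: "H $$ (r, c) = H $$ (1 - r, sw m c)" if "r < 2" "c < 2*m" for r c
  proof -
    have "H $$ (r,c) = (P2 * H * Q) $$ (r,c)" using He by simp
    also have "\<dots> = H $$ (1 - r, sw m c)" unfolding PHQ using that by simp
    finally show ?thesis .
  qed
  define h1 where "h1 = vec m (\<lambda>c. H $$ (0, c))"
  define h2 where "h2 = vec m (\<lambda>c. H $$ (0, c + m))"
  have h1c: "h1 \<in> carrier_vec m" and h2c: "h2 \<in> carrier_vec m" by (auto simp: h1_def h2_def)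
  have Hform: "H = mat 2 (2 * m) (\<lambda>(r, c).
               if r = 0 then (if c < m then h1 $ c else h2 $ (c - m))
               else (if c < m then h2 $ c else h1 $ (c - m)))" (is "H = ?G")
  proof (rule eq_matI)
    fix r c assume "r < dim_row ?G" "c < dim_col ?G"
    then have rc: "r < 2" "c < 2*m" by auto
    show "H $$ (r,c) = ?G $$ (r,c)"
    proof (cases "r = 0")
      case True
      then show ?thesis using rc by (auto simp: h1_def h2_def)
    next
      case False
      then have r1: "r = 1" using rc by auto
      have "H $$ (r,c) = H $$ (0, sw m c)" using Hsym[OF rc] r1 by simp
      then show ?thesis using rc r1 by (auto simp: h1_def h2_def sw_def)
    qed
  qed (use Hc in auto)
  have rows: "row H 0 = h1 @\<^sub>v h2" "row H 1 = h2 @\<^sub>v h1"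
    by (subst Hform, rule eq_vecI, auto simp: h1_def h2_def)+
  show ?thesis
  proof (intro exI conjI ballI)
    show "h1 \<in> carrier_vec (T - 1)" "h2 \<in> carrier_vec (T - 1)" using h1c h2c by (auto simp: m_def)
    show "Hmat x T I n sa2 se2 = mat 2 (2 * (T - 1)) (\<lambda>(r, c).
               if r = 0 then (if c < T - 1 then h1 $ c else h2 $ (c - (T - 1)))
               else (if c < T - 1 then h2 $ c else h1 $ (c - (T - 1))))"
      using Hform unfolding H_def m_def .
    fix d1 d2 :: "real vec" assume d: "d1 \<in> carrier_vec (T - 1)" "d2 \<in> carrier_vec (T - 1)"
    show "Hmat x T I n sa2 se2 *\<^sub>v (d1 @\<^sub>v d2) =
                vec 2 (\<lambda>r. if r = 0 then h1 \<bullet> d1 + h2 \<bullet> d2 else h2 \<bullet> d1 + h1 \<bullet> d2)"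
      unfolding H_def[symmetric]
    proof (rule eq_vecI)
      fix r assume "r < dim_vec (vec 2 (\<lambda>r. if r = 0 then h1 \<bullet> d1 + h2 \<bullet> d2 else h2 \<bullet> d1 + h1 \<bullet> d2))"
      then have r: "r < 2" by simp
      have d': "d1 \<in> carrier_vec m" "d2 \<in> carrier_vec m" using d by (auto simp: m_def)
      show "(H *\<^sub>v (d1 @\<^sub>v d2)) $ r = vec 2 (\<lambda>r. if r = 0 then h1 \<bullet> d1 + h2 \<bullet> d2 else h2 \<bullet> d1 + h1 \<bullet> d2) $ r"
        using r Hc rows scalar_prod_append[OF h1c h2c d'] scalar_prod_append[OF h2c h1c d']
        by (auto simp: less_2_cases_iff)
    qed (use Hc in auto)
  qed
qed
end
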